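(* Let $\alpha\in(0,1)$, $R>0$, and let $V(\lambda)$ be the maximal Phase-II observation time when at the contact time $t_2$ the target is on the boundary of the observation disk with relative bearing $\lambda\in[-\pi,\pi]$. Then the maximum possible observation time is $\max_{\lambda\in[-\pi,\pi]}V(\lambda)=\frac{2R}{1-\alpha}$.
   Context: Target: position $(0,y_T(t))$, $\dot y_T=1$. Observer: position $(x_O(t),y_O(t))$, $\dot x_O=\alpha\cos\psi(t)$, $\dot y_O=\alpha\sin\psi(t)$, heading $\psi$ a measurable control. Contact with bearing $\lambda$ at time $t_2$ means $\big(x_O(t_2),y_O(t_2)-y_T(t_2)\big)=R(\sin\lambda,\cos\lambda)$. For a control on $[t_2,\infty)$, $t_f=\inf\{t\ge t_2: x_O(t)^2+(y_O(t)-y_T(t))^2>R^2\}$ and the observation time is $t_f-t_2$; $V(\lambda)$ is the supremum of $t_f-t_2$ over all controls. *)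

theory Defs
  imports "HOL-Analysis.Analysis"
begin

text \<open>Target: position (0, yT t) with yT t = yT2 + (t - t2) (unit speed along the y-axis,
  yT2 being the target ordinate at the contact time t2).\<close>

definition target_y :: "real \<Rightarrow> real \<Rightarrow> real \<Rightarrow> real" where
  "target_y t2 yT2 t = yT2 + (t - t2)"

definition obs_x :: "real \<Rightarrow> real \<Rightarrow> real \<Rightarrow> real \<Rightarrow> (real \<Rightarrow> real) \<Rightarrow> real \<Rightarrow> real" where
  "obs_x alpha R lam t2 psi t = R * sin lam + integral {t2..t} (\<lambda>s. alpha * cos (psi s))"

definition obs_y :: "real \<Rightarrow> real \<Rightarrow> real \<Rightarrow> real \<Rightarrow> real \<Rightarrow> (real \<Rightarrow> real) \<Rightarrow> real \<Rightarrow> real" where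
  "obs_y alpha R lam t2 yT2 psi t = yT2 + R * cos lam + integral {t2..t} (\<lambda>s. alpha * sin (psi s))"

text \<open>Exit time t_f = inf of times t \<ge> t2 at which the target is strictly outside the
  observation disk of radius R; taken in the extended reals (inf of empty set = \<infinity>).\<close>
definition exit_time ::
  "real \<Rightarrow> real \<Rightarrow> real \<Rightarrow> real \<Rightarrow> real \<Rightarrow> (real \<Rightarrow> real) \<Rightarrow> ereal" where
  "exit_time alpha R lam t2 yT2 psi =
     Inf (ereal ` {t. t \<ge> t2 \<and>
        (obs_x alpha R lam t2 psi t)\<^sup>2 + (obs_y alpha R lam t2 yT2 psi t - target_y t2 yT2 t)\<^sup>2 > R\<^sup>2})"

definition V :: "real \<Rightarrow> real \<Rightarrow> real \<Rightarrow> real \<Rightarrow> real \<Rightarrow> ereal" where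
  "V alpha R t2 yT2 lam =
     (SUP psi \<in> borel_measurable lborel. exit_time alpha R lam t2 yT2 psi - ereal t2)"

end

theory Submission
  imports Defs
begin

lemma int_sin_le:
  fixes t2 t alpha :: real and psi :: "real \<Rightarrow> real"
  assumes "t2 \<le> t" "0 < alpha"
  shows "integral {t2..t} (\<lambda>s. alpha * sin (psi s)) \<le> alpha * (t - t2)"
proof (cases "(\<lambda>s. alpha * sin (psi s)) integrable_on {t2..t}")
  case True
  have "integral {t2..t} (\<lambda>s. alpha * sin (psi s)) \<le> integral {t2..t} (\<lambda>s. alpha)"
    by (rule integral_le[OF True]) (use assms in auto)
  also have "\<dots> = alpha * (t - t2)" using assms by simp
  finally show ?thesis .
next
  case False
  then show ?thesis using assms by (simp add: not_integrable_integral)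
qed

lemma exit_upper:
  assumes "0 < alpha" "alpha < 1" "0 < R"
  shows "exit_time alpha R lam t2 yT2 psi \<le> ereal (t2 + 2 * R / (1 - alpha))"
proof -
  define c where "c = t2 + 2 * R / (1 - alpha)"
  let ?S = "{t. t \<ge> t2 \<and>
        (obs_x alpha R lam t2 psi t)\<^sup>2 + (obs_y alpha R lam t2 yT2 psi t - target_y t2 yT2 t)\<^sup>2 > R\<^sup>2}"
  have mem: "t \<in> ?S" if "t > c" for t
  proof -
    have c2: "c \<ge> t2" using assms by (simp add: c_def)
    have tt: "t2 \<le> t" using that c2 by simp
    have "(t - t2) * (1 - alpha) > 2 * R"
      using that assms by (simp add: c_def field_simps)
    moreover have "R * cos lam \<le> R" using assms by simp
    moreover note int_sin_le[OF tt assms(1), of psi]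
    ultimately have "obs_y alpha R lam t2 yT2 psi t - target_y t2 yT2 t < - R"
      unfolding obs_y_def target_y_def by (simp add: algebra_simps)
    hence "R\<^sup>2 < (obs_y alpha R lam t2 yT2 psi t - target_y t2 yT2 t)\<^sup>2"
      using assms by (smt (verit) power2_minus power_strict_mono zero_less_numeral)
    moreover have "0 \<le> (obs_x alpha R lam t2 psi t)\<^sup>2" by simp
    ultimately have "R\<^sup>2 < (obs_x alpha R lam t2 psi t)\<^sup>2 + (obs_y alpha R lam t2 yT2 psi t - target_y t2 yT2 t)\<^sup>2"
      by linarith
    then show ?thesis using tt by simp
  qed
  have "Inf (ereal ` ?S) \<le> ereal c"
    unfolding Inf_le_iff
  proof (intro allI impI)
    fix y assume y: "ereal c < y"
    show "\<exists>a\<in>ereal ` ?S. a < y"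
    proof (cases y)
      case (real r)
      then have "c < r" using y by simp
      then show ?thesis using mem[of "(c + r)/2"] real
        by (intro bexI[of _ "ereal ((c + r)/2)"]) auto
    next
      case PInf
      then show ?thesis using mem[of "c + 1"]
        by (intro bexI[of _ "ereal (c + 1)"]) auto
    next
      case MInf then show ?thesis using y by simp
    qed
  qed
  then show ?thesis unfolding exit_time_def c_def .
qed

lemma exit_lower:
  assumes "0 < alpha" "alpha < 1" "0 < R"
  shows "ereal (t2 + 2 * R / (1 - alpha)) \<le> exit_time alpha R 0 t2 yT2 (\<lambda>s. pi / 2)"
  unfolding exit_time_def
proof (rule Inf_greatest)
  fix z assume "z \<in> ereal ` {t. t \<ge> t2 \<and>
        (obs_x alpha R 0 t2 (\<lambda>s. pi / 2) t)\<^sup>2 + (obs_y alpha R 0 t2 yT2 (\<lambda>s. pi / 2) t - target_y t2 yT2 t)\<^sup>2 > R\<^sup>2}"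
  then obtain t where z: "z = ereal t" and tt: "t \<ge> t2"
    and h: "(obs_x alpha R 0 t2 (\<lambda>s. pi / 2) t)\<^sup>2 + (obs_y alpha R 0 t2 yT2 (\<lambda>s. pi / 2) t - target_y t2 yT2 t)\<^sup>2 > R\<^sup>2"
    by auto
  have "(obs_x alpha R 0 t2 (\<lambda>s. pi / 2) t) = 0" by (simp add: obs_x_def)
  moreover have "obs_y alpha R 0 t2 yT2 (\<lambda>s. pi / 2) t - target_y t2 yT2 t = R - (1 - alpha) * (t - t2)"
    using tt by (simp add: obs_y_def target_y_def algebra_simps)
  ultimately have h2: "(R - (1 - alpha) * (t - t2))\<^sup>2 > R\<^sup>2" using h by simp
  define s where "s = (1 - alpha) * (t - t2)"
  have s0: "s \<ge> 0" using tt assms by (simp add: s_def)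
  have "(R - s)\<^sup>2 > R\<^sup>2" using h2 by (simp add: s_def)
  hence "s * (s - 2 * R) > 0" by (simp add: power2_eq_square algebra_simps)
  hence "s > 2 * R" using s0 by (smt (verit) mult_nonneg_nonpos)
  hence "t2 + 2 * R / (1 - alpha) \<le> t" using assms by (simp add: s_def field_simps)
  then show "ereal (t2 + 2 * R / (1 - alpha)) \<le> z" using z by simp
qed

theorem lemma5:
  fixes alpha R t2 yT2 :: real
  assumes "0 < alpha" and "alpha < 1" and "0 < R"
  shows "(\<forall>lam\<in>{-pi..pi}. V alpha R t2 yT2 lam \<le> ereal (2 * R / (1 - alpha)))
       \<and> (\<exists>lam\<in>{-pi..pi}. V alpha R t2 yT2 lam = ereal (2 * R / (1 - alpha)))"
proof -
  have up: "V alpha R t2 yT2 lam \<le> ereal (2 * R / (1 - alpha))" for lam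
    unfolding V_def
  proof (rule SUP_least)
    fix psi :: "real \<Rightarrow> real"
    have e: "exit_time alpha R lam t2 yT2 psi \<le> ereal (t2 + 2 * R / (1 - alpha))"
      by (rule exit_upper[OF assms])
    show "exit_time alpha R lam t2 yT2 psi - ereal t2 \<le> ereal (2 * R / (1 - alpha))"
      using e by (cases "exit_time alpha R lam t2 yT2 psi") auto
  qed
  have lo: "ereal (2 * R / (1 - alpha)) \<le> V alpha R t2 yT2 0"
    unfolding V_def
  proof (rule SUP_upper2)
    show "(\<lambda>s. pi / 2) \<in> borel_measurable lborel" by simp
    have e: "ereal (t2 + 2 * R / (1 - alpha)) \<le> exit_time alpha R 0 t2 yT2 (\<lambda>s. pi / 2)"
      by (rule exit_lower[OF assms])
    show "ereal (2 * R / (1 - alpha)) \<le> exit_time alpha R 0 t2 yT2 (\<lambda>s. pi / 2) - ereal t2"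
      using e by (cases "exit_time alpha R 0 t2 yT2 (\<lambda>s. pi / 2)") auto
  qed
  have "V alpha R t2 yT2 0 = ereal (2 * R / (1 - alpha))"
    using up[of 0] lo by simp
  moreover have "(0::real) \<in> {-pi..pi}" by simp
  ultimately show ?thesis using up by blast
qed

end
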